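(* In the $\ell^1$ linear social choice setting, on every instance with $n$ voters the uniform projection rule satisfies $\mathbb{E}_{c\sim f_{\mathrm{UProj}}}[\mathrm{UW}(c)]\ge\frac nd$. Consequently $\mathrm{D}(f_{\mathrm{UProj}})=O(d)$.
   Context: Setting ($\ell^1$ linear social choice). Let $\Delta_d=\{x\in\mathbb{R}^d_{\ge 0}:\sum_i x^i=1\}$ (superscripts denote coordinates). An instance consists of $n$ voters and $m$ candidates, each a vector in $\Delta_d$, with every voter vector in $\mathrm{Cone}(C)$ (nonnegative linear combinations of the candidate vectors $C$). Utility $u_v(c)=v^\top c$; voters report consistent rankings; $\mathrm{UW}(c)=\sum_v u_v(c)$. A randomized rule outputs a distribution over $C$ and may use the candidate vectors but not the voter vectors. Distortion on an instance: $\max_c\mathrm{UW}(c)/\mathbb{E}_{c\sim f}[\mathrm{UW}(c)]$; $\mathrm{D}(f)$ is the supremum over instances, as a function of $d$. Uniform projection rule $f_{\mathrm{UProj}}$: with $\mu=(1/d,\dots,1/d)$, output a distribution $(p_c)_{c\in C}$ such that $\hat c=\sum_c p_c c$ minimizes $\mathrm{KL}(\mu\|x)=\sum_{i=1}^d\mu^i\ln(\mu^i/x^i)$ over $x\in\mathrm{CH}(C)$, the convex hull of $C$. *)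

theory Defs
  imports "HOL-Analysis.Analysis"
begin

text \<open>Coordinates are indexed by a finite type 'd; the dimension is d = CARD('d).\<close>

definition in_simplex :: "real ^ 'd \<Rightarrow> bool" where
  "in_simplex x \<longleftrightarrow> (\<forall>i. 0 \<le> x $ i) \<and> (\<Sum>i\<in>UNIV. x $ i) = 1"

definition in_cone :: "(real ^ 'd) set \<Rightarrow> real ^ 'd \<Rightarrow> bool" where
  "in_cone C v \<longleftrightarrow> (\<exists>l. (\<forall>c\<in>C. 0 \<le> l c) \<and> v = (\<Sum>c\<in>C. l c *\<^sub>R c))"

definition util :: "real ^ 'd \<Rightarrow> real ^ 'd \<Rightarrow> real" where
  "util v c = v \<bullet> c"

definition UW :: "nat \<Rightarrow> (nat \<Rightarrow> real ^ 'd) \<Rightarrow> real ^ 'd \<Rightarrow> real" where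
  "UW n V c = (\<Sum>k<n. util (V k) c)"

text \<open>KL(mu || x) with mu uniform; only used for x with strictly positive coordinates
  (otherwise the divergence is +infinity).\<close>
definition KL_unif :: "real ^ 'd \<Rightarrow> real" where
  "KL_unif x = (\<Sum>i\<in>UNIV. (1 / real CARD('d)) * ln ((1 / real CARD('d)) / x $ i))"

text \<open>p is an output of the uniform projection rule on candidate set C:
  p is a distribution over C whose mean minimizes KL(mu || x) over the convex hull of C
  (the minimum being finite, i.e. attained at a point with positive coordinates).\<close>
definition is_UProj :: "(real ^ 'd) set \<Rightarrow> (real ^ 'd \<Rightarrow> real) \<Rightarrow> bool" where
  "is_UProj C p \<longleftrightarrow>
     (\<forall>c\<in>C. 0 \<le> p c) \<and> (\<Sum>c\<in>C. p c) = 1 \<and>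
     (let ch = (\<Sum>c\<in>C. p c *\<^sub>R c) in
        (\<forall>i. 0 < ch $ i) \<and>
        (\<forall>x\<in>convex hull C. (\<forall>i. 0 < x $ i) \<longrightarrow> KL_unif ch \<le> KL_unif x))"

definition expected_UW :: "(real ^ 'd) set \<Rightarrow> (real ^ 'd \<Rightarrow> real) \<Rightarrow> nat \<Rightarrow> (nat \<Rightarrow> real ^ 'd) \<Rightarrow> real" where
  "expected_UW C p n V = (\<Sum>c\<in>C. p c * UW n V c)"

end

theory Submission
  imports Defs
begin

lemma foc:
  fixes a :: "'d::finite \<Rightarrow> real"
  assumes lb: "\<forall>i. a i \<ge> -1"
    and h: "\<forall>t. 0 < t \<and> t < 1 \<longrightarrow> (\<Sum>i\<in>UNIV. ln (1 + t * a i)) \<le> 0"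
  shows "(\<Sum>i\<in>UNIV. a i) \<le> 0"
proof (rule ccontr)
  define S where "S = (\<Sum>i\<in>UNIV. a i)"
  assume "\<not> (\<Sum>i\<in>UNIV. a i) \<le> 0"
  then have S0: "S > 0" by (simp add: S_def)
  define A where "A = 1 + (\<Sum>i\<in>UNIV. \<bar>a i\<bar>)"
  have aA: "\<bar>a i\<bar> \<le> A" for i
  proof -
    have "\<bar>a i\<bar> \<le> (\<Sum>i\<in>UNIV. \<bar>a i\<bar>)"
      by (rule member_le_sum) auto
    then show ?thesis by (simp add: A_def)
  qed
  have A1: "A \<ge> 1" unfolding A_def by (simp add: sum_nonneg)
  define Q where "Q = (\<Sum>i\<in>UNIV. (a i)\<^sup>2)"
  have Q0: "Q \<ge> 0" unfolding Q_def by (simp add: sum_nonneg)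
  define s where "s = min (1/(2*A)) (S/(4*Q+1))"
  have s0: "s > 0" using S0 Q0 A1 by (simp add: s_def)
  have sA: "s \<le> 1/(2*A)" by (simp add: s_def)
  have s1: "s < 1"
  proof -
    have "1/(2*A) \<le> 1/2" using A1 by (simp add: field_simps)
    then show ?thesis using sA by linarith
  qed
  have "s \<le> S/(4*Q+1)" by (simp add: s_def)
  then have sQ: "s * (4*Q+1) \<le> S" using Q0
    by (simp add: pos_le_divide_eq)
  have bnd: "s * a i - 2 * (s * a i)\<^sup>2 \<le> ln (1 + s * a i)" for i
  proof -
    have "\<bar>s * a i\<bar> \<le> s * A" using aA[of i] s0 by (simp add: abs_mult mult_left_mono)
    also have "\<dots> \<le> 1/2" using sA A1 by (simp add: field_simps)
    finally have "\<bar>ln (1 + s * a i) - s * a i\<bar> \<le> 2 * (s * a i)\<^sup>2"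
      by (rule abs_ln_one_plus_x_minus_x_bound)
    then show ?thesis by linarith
  qed
  have "(\<Sum>i\<in>UNIV. s * a i - 2 * (s * a i)\<^sup>2) \<le> (\<Sum>i\<in>UNIV. ln (1 + s * a i))"
    by (rule sum_mono) (rule bnd)
  also have "\<dots> \<le> 0" using h s0 s1 by blast
  finally have "s * S - 2 * s\<^sup>2 * Q \<le> 0"
    by (simp add: S_def Q_def sum_subtractf sum_distrib_left power_mult_distrib mult.assoc)
  then have "S \<le> 2 * s * Q" using s0 by (simp add: power2_eq_square field_simps)
  moreover have "2 * s * Q < S"
  proof -
    have "2 * s * Q \<le> s * (4*Q+1) - s" using s0 Q0 by (simp add: algebra_simps)
    then show ?thesis using sQ s0 by linarith
  qed
  ultimately show False by linarith
qed

lemma cs: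
  fixes v ch :: "real ^ 'd"
  assumes "in_simplex v" and pos: "\<forall>i. 0 < ch $ i"
    and R: "(\<Sum>i\<in>UNIV. v $ i / ch $ i) \<le> real CARD('d)"
  shows "v \<bullet> ch \<ge> 1 / real CARD('d)"
proof -
  define d where "d = real CARD('d)"
  have d0: "d > 0" by (simp add: d_def)
  have v0: "\<forall>i. 0 \<le> v $ i" and v1: "(\<Sum>i\<in>UNIV. v $ i) = 1"
    using assms(1) by (auto simp: in_simplex_def)
  have pt: "2 * v $ i \<le> d * (v $ i * ch $ i) + v $ i / ch $ i / d" for i
  proof -
    have c: "ch $ i > 0" using pos by auto
    have "0 \<le> v $ i * (d * ch $ i - 1)\<^sup>2 / (d * ch $ i)"
      using v0 c d0 by simp
    also have "v $ i * (d * ch $ i - 1)\<^sup>2 / (d * ch $ i)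
        = d * (v $ i * ch $ i) + v $ i / ch $ i / d - 2 * v $ i"
      using c d0 by (simp add: field_simps power2_eq_square)
    finally show ?thesis by linarith
  qed
  have "(\<Sum>i\<in>UNIV. 2 * v $ i) \<le> (\<Sum>i\<in>UNIV. d * (v $ i * ch $ i) + v $ i / ch $ i / d)"
    by (rule sum_mono) (rule pt)
  also have "\<dots> = d * (v \<bullet> ch) + (\<Sum>i\<in>UNIV. v $ i / ch $ i) / d"
    by (simp add: sum.distrib sum_distrib_left sum_divide_distrib inner_vec_def)
  finally have "2 \<le> d * (v \<bullet> ch) + (\<Sum>i\<in>UNIV. v $ i / ch $ i) / d"
    by (simp add: v1 flip: sum_distrib_left)
  moreover have "(\<Sum>i\<in>UNIV. v $ i / ch $ i) / d \<le> 1" using R d0 by (simp add: d_def)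
  ultimately have "1 \<le> d * (v \<bullet> ch)" by linarith
  then show ?thesis using d0 by (simp add: d_def field_simps)
qed


lemma util_le1:
  fixes v c :: "real ^ 'd"
  assumes "in_simplex v" "in_simplex c"
  shows "v \<bullet> c \<le> 1"
proof -
  have c1: "c $ i \<le> 1" for i
  proof -
    have "c $ i \<le> (\<Sum>j\<in>UNIV. c $ j)"
      by (rule member_le_sum) (use assms(2) in \<open>auto simp: in_simplex_def\<close>)
    then show ?thesis using assms(2) by (simp add: in_simplex_def)
  qed
  have "v \<bullet> c = (\<Sum>i\<in>UNIV. v $ i * c $ i)" by (simp add: inner_vec_def)
  also have "\<dots> \<le> (\<Sum>i\<in>UNIV. v $ i)"
    by (rule sum_mono) (use assms(1) c1 in \<open>auto simp: in_simplex_def intro: mult_left_le\<close>)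
  also have "\<dots> = 1" using assms(1) by (simp add: in_simplex_def)
  finally show ?thesis .
qed

lemma key_foc:
  fixes C :: "(real ^ 'd) set" and p :: "real ^ 'd \<Rightarrow> real"
  assumes fin: "finite C" and simp: "\<forall>c\<in>C. in_simplex c" and U: "is_UProj C p"
    and cC: "c \<in> C"
  shows "(\<Sum>i\<in>UNIV. c $ i / (\<Sum>c\<in>C. p c *\<^sub>R c) $ i) \<le> real CARD('d)"
proof -
  define ch where "ch = (\<Sum>c\<in>C. p c *\<^sub>R c)"
  define d where "d = real CARD('d)"
  have d0: "d > 0" by (simp add: d_def)
  have p0: "\<forall>c\<in>C. 0 \<le> p c" and p1: "(\<Sum>c\<in>C. p c) = 1"
    and pos: "\<forall>i. 0 < ch $ i"
    and opt: "\<forall>x\<in>convex hull C. (\<forall>i. 0 < x $ i) \<longrightarrow> KL_unif ch \<le> KL_unif x"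
    using U unfolding is_UProj_def Let_def ch_def by auto
  have chC: "ch \<in> convex hull C"
    unfolding convex_hull_finite[OF fin] ch_def using p0 p1 by blast
  have cH: "c \<in> convex hull C" using cC by (rule hull_inc)
  have c0: "\<forall>i. 0 \<le> c $ i" using simp cC by (auto simp: in_simplex_def)
  define a where "a i = (c $ i - ch $ i) / ch $ i" for i
  have alb: "\<forall>i. a i \<ge> -1"
  proof
    fix i
    have "ch $ i > 0" using pos by auto
    then show "a i \<ge> -1" using c0 by (simp add: a_def field_simps)
  qed
  have h: "\<forall>t. 0 < t \<and> t < 1 \<longrightarrow> (\<Sum>i\<in>UNIV. ln (1 + t * a i)) \<le> 0"
  proof (intro allI impI)
    fix t :: real
    assume t: "0 < t \<and> t < 1"
    define x where "x = (1 - t) *\<^sub>R ch + t *\<^sub>R c"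
    have xH: "x \<in> convex hull C"
      unfolding x_def using t chC cH
      by (intro convexD[OF convex_convex_hull]) auto
    have xi: "x $ i = ch $ i * (1 + t * a i)" for i
    proof -
      have "ch $ i > 0" using pos by auto
      then show ?thesis by (simp add: x_def a_def field_simps)
    qed
    have xpos: "0 < x $ i" for i
    proof -
      have "ch $ i > 0" using pos by auto
      moreover have "0 \<le> c $ i" using c0 by auto
      ultimately have "0 < (1 - t) * ch $ i + t * c $ i" using t
        by (simp add: add_pos_nonneg)
      then show ?thesis by (simp add: x_def)
    qed
    have ta: "0 < 1 + t * a i" for i
    proof -
      have "ch $ i > 0" using pos by auto
      then show ?thesis using xpos[of i] xi[of i] by (simp add: zero_less_mult_iff)
    qed
    have "KL_unif ch \<le> KL_unif x" using opt xH xpos by blast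
    moreover have "KL_unif x = KL_unif ch - (1/d) * (\<Sum>i\<in>UNIV. ln (1 + t * a i))"
    proof -
      have "ln ((1/d) / x $ i) = ln ((1/d) / ch $ i) - ln (1 + t * a i)" for i
      proof -
        have chp: "ch $ i > 0" using pos by auto
        have "(1/d) / x $ i = ((1/d) / ch $ i) / (1 + t * a i)" by (simp add: xi)
        then show ?thesis using chp ta[of i] d0 by (simp add: ln_div ln_mult)
      qed
      then show ?thesis
        by (simp add: KL_unif_def d_def[symmetric] sum_subtractf right_diff_distrib sum_distrib_left)
    qed
    ultimately show "(\<Sum>i\<in>UNIV. ln (1 + t * a i)) \<le> 0" using d0
      by (simp add: field_simps)
  qed
  have "(\<Sum>i\<in>UNIV. a i) \<le> 0" by (rule foc[OF alb h])
  moreover have "(\<Sum>i\<in>UNIV. a i) = (\<Sum>i\<in>UNIV. c $ i / ch $ i) - d"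
  proof -
    have "a i = c $ i / ch $ i - 1" for i
    proof -
      have "ch $ i > 0" using pos by auto
      then show ?thesis by (simp add: a_def field_simps)
    qed
    then show ?thesis by (simp add: sum_subtractf d_def)
  qed
  ultimately show ?thesis by (simp add: ch_def d_def)
qed

theorem theorem5:
  fixes C :: "(real ^ 'd) set" and V :: "nat \<Rightarrow> real ^ 'd" and n :: nat
    and p :: "real ^ 'd \<Rightarrow> real"
  assumes "finite C" and "C \<noteq> {}"
    and "\<forall>c\<in>C. in_simplex c"
    and "\<forall>k<n. in_simplex (V k) \<and> in_cone C (V k)"
    and "is_UProj C p"
  shows "expected_UW C p n V \<ge> real n / real CARD('d)
         \<and> (MAX c\<in>C. UW n V c) \<le> real CARD('d) * expected_UW C p n V"
proof -
  define ch where "ch = (\<Sum>c\<in>C. p c *\<^sub>R c)"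
  define d where "d = real CARD('d)"
  have d0: "d > 0" by (simp add: d_def)
  have pos: "\<forall>i. 0 < ch $ i"
    using assms(5) unfolding is_UProj_def Let_def ch_def by auto
  have key: "\<forall>c\<in>C. (\<Sum>i\<in>UNIV. c $ i / ch $ i) \<le> d"
    using key_foc[OF assms(1) assms(3) assms(5)] by (simp add: ch_def d_def)
  have vk: "V k \<bullet> ch \<ge> 1 / d" if k: "k < n" for k
  proof -
    have vs: "in_simplex (V k)" and "in_cone C (V k)" using assms(4) k by auto
    then obtain l where l0: "\<forall>c\<in>C. 0 \<le> l c" and lv: "V k = (\<Sum>c\<in>C. l c *\<^sub>R c)"
      unfolding in_cone_def by blast
    have "1 = (\<Sum>i\<in>UNIV. V k $ i)" using vs by (simp add: in_simplex_def)
    also have "\<dots> = (\<Sum>c\<in>C. l c * (\<Sum>i\<in>UNIV. c $ i))"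
      by (simp add: lv sum_component sum_distrib_left) (rule sum.swap)
    also have "\<dots> = (\<Sum>c\<in>C. l c)"
      using assms(3) by (intro sum.cong) (auto simp: in_simplex_def)
    finally have l1: "(\<Sum>c\<in>C. l c) = 1" by simp
    have "(\<Sum>i\<in>UNIV. V k $ i / ch $ i) = (\<Sum>c\<in>C. l c * (\<Sum>i\<in>UNIV. c $ i / ch $ i))"
      by (simp add: lv sum_component sum_distrib_left sum_divide_distrib) (rule sum.swap)
    also have "\<dots> \<le> (\<Sum>c\<in>C. l c * d)"
      using l0 key by (intro sum_mono mult_left_mono) auto
    also have "\<dots> = d" using l1 by (simp flip: sum_distrib_right)
    finally have "(\<Sum>i\<in>UNIV. V k $ i / ch $ i) \<le> real CARD('d)" by (simp add: d_def)
    from cs[OF vs pos this] show ?thesis by (simp add: d_def)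
  qed
  have E: "expected_UW C p n V = (\<Sum>k<n. V k \<bullet> ch)"
    unfolding expected_UW_def UW_def util_def ch_def
    by (simp add: inner_sum_right sum_distrib_left) (rule sum.swap)
  have E1: "expected_UW C p n V \<ge> real n / d"
  proof -
    have "(\<Sum>k<n. 1 / d) \<le> (\<Sum>k<n. V k \<bullet> ch)" by (rule sum_mono) (simp add: vk)
    then show ?thesis by (simp add: E)
  qed
  have M: "(MAX c\<in>C. UW n V c) \<le> real n"
  proof (subst Max_le_iff)
    show "finite (UW n V ` C)" using assms(1) by simp
    show "UW n V ` C \<noteq> {}" using assms(2) by simp
    show "\<forall>a\<in>UW n V ` C. a \<le> real n"
    proof
      fix a assume "a \<in> UW n V ` C"
      then obtain c where c: "c \<in> C" and a: "a = UW n V c" by blast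
      have "(\<Sum>k<n. util (V k) c) \<le> (\<Sum>k<n. 1)"
        using assms(3,4) c by (intro sum_mono) (auto simp: util_def intro: util_le1)
      then show "a \<le> real n" by (simp add: a UW_def)
    qed
  qed
  have "real n \<le> d * expected_UW C p n V" using E1 d0 by (simp add: field_simps)
  then show ?thesis using E1 M by (simp add: d_def)
qed

end
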